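(* Assume $\widetilde p_i\propto i^{-\beta}$ for a constant $\beta>1$, $M=\omega_K(1)$, and total training time $T\eqsim M^\beta$. Let $\alpha\in(0,1)$ and run GD with learning rate $\eta$ satisfying $\eta p_1\lesssim1$ from $\mathbf{W}_0=\mathbf{0}$. Then $$\mathcal{L}^{\mathrm{GD}}(T)-\mathcal{L}^*\gtrsim\frac{\log K}{T^{1-1/\beta}}.$$
   Context: Setup: $K=MC$ items in $M$ groups of $C$ items (group $i$: indices $(i-1)C+1,\dots,iC$); $\widetilde p_1>\dots>\widetilde p_M>0$, $\sum_i\widetilde p_i=1$, $p_j=\widetilde p_i/C$ for $j$ in group $i$. $\mathbf{E},\widetilde{\mathbf{E}}\in\mathbb{R}^{K\times K}$ have orthonormal columns. Noise: $p_{i\mid j}=1-\alpha+\alpha/K$ if $i=j$, $\alpha/K$ otherwise. $\widehat p_{i\mid j}(\mathbf{W})=\exp(\widetilde{\mathbf{E}}_i^\top\mathbf{W}\mathbf{E}_j)/\sum_k\exp(\widetilde{\mathbf{E}}_k^\top\mathbf{W}\mathbf{E}_j)$; $\mathcal{L}(\mathbf{W})=-\sum_jp_j\sum_ip_{i\mid j}\log\widehat p_{i\mid j}(\mathbf{W})$, with minimal value $\mathcal{L}^*=-\big(1-\alpha+\tfrac{\alpha}{K}\big)\log\big(1-\alpha+\tfrac{\alpha}{K}\big)-\tfrac{\alpha(K-1)}{K}\log\tfrac{\alpha}{K}$. GD: $\mathbf{W}_{t+1}=\mathbf{W}_t-\eta\nabla\mathcal{L}(\mathbf{W}_t)$, $\mathcal{L}^{\mathrm{GD}}(T)=\mathcal{L}(\mathbf{W}_T)$.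 Regime $K\gg1$, $M\ll C$; $\omega_K(1)$ denotes a quantity tending to infinity as $K\to\infty$; $\eqsim,\lesssim,\gtrsim$ hide constant factors. *)

theory Defs
  imports "HOL-Analysis.Analysis"
begin

(* Conventions: items are indexed 0..K-1 (K = M*C); item j lies in group j div C
   (0-indexed groups 0..M-1). Matrices are functions nat => nat => real, only the
   entries with indices < K matter. *)

definition ptil :: "real \<Rightarrow> nat \<Rightarrow> nat \<Rightarrow> real" where
  "ptil \<beta> M i = real (i+1) powr (-\<beta>) / (\<Sum>k<M. real (k+1) powr (-\<beta>))"

definition pitem :: "real \<Rightarrow> nat \<Rightarrow> nat \<Rightarrow> nat \<Rightarrow> real" where
  "pitem \<beta> M C j = ptil \<beta> M (j div C) / real C"

definition pcond :: "real \<Rightarrow> nat \<Rightarrow> nat \<Rightarrow> nat \<Rightarrow> real" where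
  "pcond \<alpha> K i j = (if i = j then 1 - \<alpha> + \<alpha> / real K else \<alpha> / real K)"

definition orthonormal_cols :: "nat \<Rightarrow> (nat \<Rightarrow> nat \<Rightarrow> real) \<Rightarrow> bool" where
  "orthonormal_cols K E \<longleftrightarrow>
     (\<forall>i<K. \<forall>j<K. (\<Sum>k<K. E k i * E k j) = (if i = j then 1 else 0))"

definition logit :: "nat \<Rightarrow> (nat \<Rightarrow> nat \<Rightarrow> real) \<Rightarrow> (nat \<Rightarrow> nat \<Rightarrow> real)
    \<Rightarrow> (nat \<Rightarrow> nat \<Rightarrow> real) \<Rightarrow> nat \<Rightarrow> nat \<Rightarrow> real" where
  "logit K E Et W i j = (\<Sum>a<K. \<Sum>b<K. Et a i * W a b * E b j)"

definition phat :: "nat \<Rightarrow> (nat \<Rightarrow> nat \<Rightarrow> real) \<Rightarrow> (nat \<Rightarrow> nat \<Rightarrow> real)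
    \<Rightarrow> (nat \<Rightarrow> nat \<Rightarrow> real) \<Rightarrow> nat \<Rightarrow> nat \<Rightarrow> real" where
  "phat K E Et W i j = exp (logit K E Et W i j) / (\<Sum>k<K. exp (logit K E Et W k j))"

definition loss :: "real \<Rightarrow> nat \<Rightarrow> nat \<Rightarrow> real \<Rightarrow> (nat \<Rightarrow> nat \<Rightarrow> real)
    \<Rightarrow> (nat \<Rightarrow> nat \<Rightarrow> real) \<Rightarrow> (nat \<Rightarrow> nat \<Rightarrow> real) \<Rightarrow> real" where
  "loss \<beta> M C \<alpha> E Et W =
     - (\<Sum>j<M*C. pitem \<beta> M C j * (\<Sum>i<M*C. pcond \<alpha> (M*C) i j * ln (phat (M*C) E Et W i j)))"

definition Lstar :: "real \<Rightarrow> nat \<Rightarrow> real" where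
  "Lstar \<alpha> K = - (1 - \<alpha> + \<alpha> / real K) * ln (1 - \<alpha> + \<alpha> / real K)
                 - \<alpha> * (real K - 1) / real K * ln (\<alpha> / real K)"

definition grad :: "((nat \<Rightarrow> nat \<Rightarrow> real) \<Rightarrow> real) \<Rightarrow> (nat \<Rightarrow> nat \<Rightarrow> real) \<Rightarrow> nat \<Rightarrow> nat \<Rightarrow> real" where
  "grad L W a b = deriv (\<lambda>t. L (\<lambda>x y. W x y + (if x = a \<and> y = b then t else 0))) 0"

primrec gd :: "((nat \<Rightarrow> nat \<Rightarrow> real) \<Rightarrow> real) \<Rightarrow> real \<Rightarrow> (nat \<Rightarrow> nat \<Rightarrow> real) \<Rightarrow> nat
    \<Rightarrow> nat \<Rightarrow> nat \<Rightarrow> real" where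
  "gd L \<eta> W0 0 = W0"
| "gd L \<eta> W0 (Suc t) = (\<lambda>a b. gd L \<eta> W0 t a b - \<eta> * grad L (gd L \<eta> W0 t) a b)"

end

theory Submission imports Defs begin


definition CE :: "nat \<Rightarrow> (nat \<Rightarrow> real) \<Rightarrow> (nat \<Rightarrow> nat \<Rightarrow> real) \<Rightarrow> (nat \<Rightarrow> nat \<Rightarrow> real)
    \<Rightarrow> (nat \<Rightarrow> nat \<Rightarrow> real) \<Rightarrow> (nat \<Rightarrow> nat \<Rightarrow> real) \<Rightarrow> real" where
  "CE K pj pc E Et W = - (\<Sum>j<K. pj j * (\<Sum>i<K. pc i j * ln (phat K E Et W i j)))"

lemma loss_CE: "loss \<beta> M C \<alpha> E Et = CE (M*C) (pitem \<beta> M C) (\<lambda>i j. pcond \<alpha> (M*C) i j) E Et"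
  unfolding loss_def CE_def by (rule ext) simp

lemma logit_pert:
  assumes "a < K" "b < K"
  shows "logit K E Et (\<lambda>x y. W x y + (if x = a \<and> y = b then t else 0)) i j
       = logit K E Et W i j + t * (Et a i * E b j)"
proof -
  have "logit K E Et (\<lambda>x y. W x y + (if x = a \<and> y = b then t else 0)) i j
     = logit K E Et W i j + (\<Sum>x<K. \<Sum>y<K. Et x i * (if x = a \<and> y = b then t else 0) * E y j)"
    unfolding logit_def by (simp add: algebra_simps sum.distrib)
  also have "(\<Sum>x<K. \<Sum>y<K. Et x i * (if x = a \<and> y = b then t else 0) * E y j)
     = (\<Sum>x<K. if x = a then Et x i * t * E b j else 0)"
  proof (rule sum.cong)
    fix x assume "x \<in> {..<K}"
    have "\<And>y. Et x i * (if x = a \<and> y = b then t else 0) * E y j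
       = (if y = b then (if x = a then Et x i * t * E b j else 0) else 0)" by auto
    then show "(\<Sum>y<K. Et x i * (if x = a \<and> y = b then t else 0) * E y j)
       = (if x = a then Et x i * t * E b j else 0)"
      using assms by (simp add: sum.delta)
  qed simp
  also have "\<dots> = Et a i * t * E b j" using assms by simp
  finally show ?thesis by simp
qed

lemma ln_phat:
  assumes "K > 0"
  shows "ln (phat K E Et W i j) = logit K E Et W i j - ln (\<Sum>k<K. exp (logit K E Et W k j))"
proof -
  have "(\<Sum>k<K. exp (logit K E Et W k j)) > 0"
    using assms by (intro sum_pos) auto
  then show ?thesis unfolding phat_def by (simp add: ln_div)
qed

lemma grad_CE:
  assumes K: "K > 0" and ab: "a < K" "b < K"
    and pcsum: "\<And>j. j < K \<Longrightarrow> (\<Sum>i<K. pc i j) = 1"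
  shows "grad (CE K pj pc E Et) W a b
     = (\<Sum>j<K. pj j * (\<Sum>i<K. (phat K E Et W i j - pc i j) * (Et a i * E b j)))"
proof -
  define Z where "Z i j = logit K E Et W i j" for i j
  define u where "u i j = Et a i * E b j" for i j
  have feq: "(\<lambda>t. CE K pj pc E Et (\<lambda>x y. W x y + (if x = a \<and> y = b then t else 0)))
     = (\<lambda>t. - (\<Sum>j<K. pj j * (\<Sum>i<K. pc i j * (Z i j + t * u i j
            - ln (\<Sum>k<K. exp (Z k j + t * u k j))))))"
    by (auto simp: CE_def ln_phat[OF K] logit_pert[OF ab] Z_def u_def)
  have spos: "\<And>j t. (\<Sum>k<K. exp (Z k j + t * u k j)) > 0"
    using K by (intro sum_pos) auto
  have D: "((\<lambda>t. - (\<Sum>j<K. pj j * (\<Sum>i<K. pc i j * (Z i j + t * u i j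
            - ln (\<Sum>k<K. exp (Z k j + t * u k j)))))) has_real_derivative
       - (\<Sum>j<K. pj j * (\<Sum>i<K. pc i j * (u i j - (\<Sum>k<K. exp (Z k j) * u k j) / (\<Sum>k<K. exp (Z k j))))))
      (at 0)"
    using spos[of _ 0] by (intro derivative_eq_intros) (auto simp: spos mult.commute)
  have per: "- (pc_sum) = r" if "j < K" and "pc_sum = (\<Sum>i<K. pc i j * (u i j - (\<Sum>k<K. exp (Z k j) * u k j) / (\<Sum>k<K. exp (Z k j))))"
     and "r = (\<Sum>i<K. (phat K E Et W i j - pc i j) * (Et a i * E b j))" for j pc_sum r
  proof -
    define A where "A = (\<Sum>k<K. exp (Z k j) * u k j)"
    define S where "S = (\<Sum>k<K. exp (Z k j))"
    have "pc_sum = (\<Sum>i<K. pc i j * u i j) - (\<Sum>i<K. pc i j) * (A / S)"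
      unfolding that(2) A_def[symmetric] S_def[symmetric]
      by (simp add: right_diff_distrib sum_subtractf sum_distrib_right sum_divide_distrib)
    also have "\<dots> = (\<Sum>i<K. pc i j * u i j) - A / S" using pcsum[OF that(1)] by simp
    finally have 1: "pc_sum = (\<Sum>i<K. pc i j * u i j) - A / S" .
    have "r = (\<Sum>i<K. exp (Z i j) * u i j / S) - (\<Sum>i<K. pc i j * u i j)"
      unfolding that(3) phat_def Z_def S_def u_def
      by (simp add: left_diff_distrib sum_subtractf)
    also have "(\<Sum>i<K. exp (Z i j) * u i j / S) = A / S"
      unfolding A_def by (simp add: sum_divide_distrib)
    finally show ?thesis using 1 by simp
  qed
  have "grad (CE K pj pc E Et) W a b = - (\<Sum>j<K. pj j * (\<Sum>i<K. pc i j * (u i j - (\<Sum>k<K. exp (Z k j) * u k j) / (\<Sum>k<K. exp (Z k j)))))"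
    unfolding grad_def feq by (rule DERIV_imp_deriv[OF D])
  also have "\<dots> = (\<Sum>j<K. pj j * (- (\<Sum>i<K. pc i j * (u i j - (\<Sum>k<K. exp (Z k j) * u k j) / (\<Sum>k<K. exp (Z k j))))))"
    by (simp add: sum_negf)
  also have "\<dots> = (\<Sum>j<K. pj j * (\<Sum>i<K. (phat K E Et W i j - pc i j) * (Et a i * E b j)))"
    by (rule sum.cong[OF refl]) (simp add: per)
  finally show ?thesis .
qed

lemma ortho_collapse:
  assumes "orthonormal_cols K E" "j < K"
  shows "(\<Sum>b<K. E b j * (\<Sum>j'<K. c j' * E b j')) = c j"
proof -
  have "(\<Sum>b<K. E b j * (\<Sum>j'<K. c j' * E b j')) = (\<Sum>b<K. \<Sum>j'<K. c j' * (E b j' * E b j))"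
    by (simp add: sum_distrib_left ac_simps)
  also have "\<dots> = (\<Sum>j'<K. \<Sum>b<K. c j' * (E b j' * E b j))" by (rule sum.swap)
  also have "\<dots> = (\<Sum>j'<K. c j' * (if j' = j then 1 else 0))"
    using assms unfolding orthonormal_cols_def by (auto simp: sum_distrib_left[symmetric] intro!: sum.cong)
  also have "\<dots> = c j" using assms(2) by (simp add: if_distrib sum.delta cong: if_cong)
  finally show ?thesis .
qed

definition Gm :: "nat \<Rightarrow> (nat \<Rightarrow> real) \<Rightarrow> (nat \<Rightarrow> nat \<Rightarrow> real) \<Rightarrow> (nat \<Rightarrow> nat \<Rightarrow> real)
    \<Rightarrow> (nat \<Rightarrow> nat \<Rightarrow> real) \<Rightarrow> (nat \<Rightarrow> nat \<Rightarrow> real) \<Rightarrow> nat \<Rightarrow> nat \<Rightarrow> real" where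
  "Gm K pj pc E Et W i j = pj j * (phat K E Et W i j - pc i j)"

lemma logit_step:
  assumes K: "K > 0" and oE: "orthonormal_cols K E" and oEt: "orthonormal_cols K Et"
    and pcsum: "\<And>j. j < K \<Longrightarrow> (\<Sum>i<K. pc i j) = 1"
    and ij: "i < K" "j < K"
  shows "logit K E Et (\<lambda>a b. W a b - \<eta> * grad (CE K pj pc E Et) W a b) i j
       = logit K E Et W i j - \<eta> * Gm K pj pc E Et W i j"
proof -
  define G where "G = Gm K pj pc E Et W"
  have g: "grad (CE K pj pc E Et) W a b = (\<Sum>j'<K. (\<Sum>i'<K. G i' j' * Et a i') * E b j')"
    if "a < K" "b < K" for a b
    using grad_CE[OF K that pcsum, where pj=pj and E=E and Et=Et and W=W]
    by (simp add: G_def Gm_def sum_distrib_left sum_distrib_right ac_simps)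
  have "logit K E Et (\<lambda>a b. W a b - \<eta> * grad (CE K pj pc E Et) W a b) i j
      = (\<Sum>a<K. \<Sum>b<K. Et a i * W a b * E b j - \<eta> * (Et a i * (E b j * (\<Sum>j'<K. (\<Sum>i'<K. G i' j' * Et a i') * E b j'))))"
    unfolding logit_def by (intro sum.cong refl) (simp add: g algebra_simps)
  also have "\<dots> = logit K E Et W i j - \<eta> * (\<Sum>a<K. Et a i * (\<Sum>b<K. E b j * (\<Sum>j'<K. (\<Sum>i'<K. G i' j' * Et a i') * E b j')))"
    unfolding logit_def by (simp add: sum_subtractf sum_distrib_left)
  also have "(\<Sum>a<K. Et a i * (\<Sum>b<K. E b j * (\<Sum>j'<K. (\<Sum>i'<K. G i' j' * Et a i') * E b j')))
      = (\<Sum>a<K. Et a i * (\<Sum>i'<K. G i' j * Et a i'))"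
    by (simp add: ortho_collapse[OF oE ij(2)])
  also have "\<dots> = G i j" by (rule ortho_collapse[OF oEt ij(1)])
  finally show ?thesis unfolding G_def .
qed

lemma phat_pos: "K > 0 \<Longrightarrow> phat K E Et W i j > 0"
  unfolding phat_def by (intro divide_pos_pos) (auto intro!: sum_pos)

lemma phat_le1: "K > 0 \<Longrightarrow> i < K \<Longrightarrow> phat K E Et W i j \<le> 1"
  unfolding phat_def
  by (subst divide_le_eq_1_pos) (auto intro!: sum_pos member_le_sum)

lemma phat_sum: "K > 0 \<Longrightarrow> (\<Sum>i<K. phat K E Et W i j) = 1"
proof -
  assume K: "K > 0"
  have "(\<Sum>k<K. exp (logit K E Et W k j)) > 0" using K by (intro sum_pos) auto
  then show ?thesis unfolding phat_def by (simp add: sum_divide_distrib[symmetric])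
qed

lemma gd_gap:
  assumes K: "K > 0" and oE: "orthonormal_cols K E" and oEt: "orthonormal_cols K Et"
    and pcsum: "\<And>j. j < K \<Longrightarrow> (\<Sum>i<K. pc i j) = 1"
    and pcb: "\<And>i j. 0 \<le> pc i j \<and> pc i j \<le> 1"
    and ij: "i < K" "j < K" and eta: "\<eta> \<ge> 0" and pj: "pj j \<ge> 0"
  shows "logit K E Et (gd (CE K pj pc E Et) \<eta> Winit t) j j - logit K E Et (gd (CE K pj pc E Et) \<eta> Winit t) i j
     \<le> logit K E Et Winit j j - logit K E Et Winit i j + 2 * \<eta> * pj j * real t"
proof (induction t)
  case 0
  then show ?case by simp
next
  case (Suc t)
  define W where "W = gd (CE K pj pc E Et) \<eta> Winit t"
  have step: "logit K E Et (gd (CE K pj pc E Et) \<eta> Winit (Suc t)) i' j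
      = logit K E Et W i' j - \<eta> * Gm K pj pc E Et W i' j" if "i' < K" for i'
    unfolding W_def gd.simps by (rule logit_step[OF K oE oEt pcsum that ij(2)])
  have b: "pc j j + phat K E Et W i j - phat K E Et W j j - pc i j \<le> 2"
    using pcb[of j j] pcb[of i j] phat_le1[OF K ij(1), of E Et W j] phat_pos[OF K, of E Et W j j] by linarith
  have "\<eta> * pj j * (pc j j + phat K E Et W i j - phat K E Et W j j - pc i j) \<le> \<eta> * pj j * 2"
    using eta pj b by (intro mult_left_mono) auto
  then show ?case using Suc.IH step[OF ij(1)] step[OF ij(2)] unfolding W_def[symmetric] Gm_def
    by (simp add: algebra_simps)
qed

lemma phat_diag_bound:
  assumes K: "K \<ge> 2" and j: "j < K"
    and D: "\<And>i. i < K \<Longrightarrow> i \<noteq> j \<Longrightarrow> logit K E Et W j j - logit K E Et W i j \<le> D"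
  shows "phat K E Et W j j \<le> exp D / (real K - 1)"
proof -
  define Z where "Z i = logit K E Et W i j" for i
  have "(\<Sum>k\<in>{..<K}-{j}. exp (Z j - D)) \<le> (\<Sum>k\<in>{..<K}-{j}. exp (Z k))"
    using D unfolding Z_def by (intro sum_mono) (auto, smt (verit) D)
  also have "\<dots> \<le> (\<Sum>k<K. exp (Z k))" by (intro sum_mono2) auto
  finally have 1: "(real K - 1) * exp (Z j - D) \<le> (\<Sum>k<K. exp (Z k))"
    using j K by (simp add: card_Diff_singleton of_nat_diff)
  have pos: "(real K - 1) * exp (Z j - D) > 0" using K by simp
  have "phat K E Et W j j = exp (Z j) / (\<Sum>k<K. exp (Z k))" unfolding phat_def Z_def ..
  also have "\<dots> \<le> exp (Z j) / ((real K - 1) * exp (Z j - D))"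
    by (rule divide_left_mono[OF 1]) (use pos 1 in auto)
  also have "\<dots> = exp D / (real K - 1)"
  proof -
    have "real K - 1 \<noteq> 0" using K by simp
    then show ?thesis by (simp add: exp_diff)
  qed
  finally show ?thesis .
qed

lemma plnq_ge: "(p::real) > 0 \<Longrightarrow> q > 0 \<Longrightarrow> p * ln p - p * ln q \<ge> p - q"
proof -
  assume p: "p > 0" and q: "q > 0"
  have "ln (q / p) \<le> q / p - 1" using p q by (intro ln_le_minus_one) simp
  then have "p * ln (q / p) \<le> p * (q / p - 1)" using p by (intro mult_left_mono) auto
  then show ?thesis using p q by (simp add: ln_div algebra_simps)
qed

lemma KL_nonneg:
  fixes p q :: "nat \<Rightarrow> real"
  assumes "\<And>i. i < K \<Longrightarrow> p i > 0" "\<And>i. i < K \<Longrightarrow> q i > 0"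
    "(\<Sum>i<K. p i) = 1" "(\<Sum>i<K. q i) = 1"
  shows "(\<Sum>i<K. p i * ln (p i)) - (\<Sum>i<K. p i * ln (q i)) \<ge> 0"
proof -
  have "(\<Sum>i<K. p i - q i) \<le> (\<Sum>i<K. p i * ln (p i) - p i * ln (q i))"
    using assms by (intro sum_mono plnq_ge) auto
  then show ?thesis using assms by (simp add: sum_subtractf)
qed

lemma KL_diag:
  fixes p q :: "nat \<Rightarrow> real"
  assumes "\<And>i. i < K \<Longrightarrow> p i > 0" "\<And>i. i < K \<Longrightarrow> q i > 0"
    "(\<Sum>i<K. q i) = 1" "j < K"
  shows "(\<Sum>i<K. p i * ln (p i)) - (\<Sum>i<K. p i * ln (q i)) \<ge> p j * ln (p j / q j) - 1"
proof -
  have e1: "(\<Sum>i<K. p i * ln (p i)) - (\<Sum>i<K. p i * ln (q i)) = (\<Sum>i<K. p i * ln (p i) - p i * ln (q i))"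
    by (simp add: sum_subtractf)
  have e2: "(\<Sum>i<K. p i * ln (p i) - p i * ln (q i)) = (p j * ln (p j) - p j * ln (q j)) + (\<Sum>i\<in>{..<K}-{j}. p i * ln (p i) - p i * ln (q i))"
    using assms(4) by (subst sum.remove[of _ j]) auto
  have e3: "(\<Sum>i\<in>{..<K}-{j}. p i * ln (p i) - p i * ln (q i)) \<ge> (\<Sum>i\<in>{..<K}-{j}. p i - q i)"
    using assms by (intro sum_mono plnq_ge) auto
  have e4: "(\<Sum>i\<in>{..<K}-{j}. p i - q i) \<ge> - 1"
  proof -
    have "(\<Sum>i\<in>{..<K}-{j}. p i) \<ge> 0" using assms by (intro sum_nonneg) (auto intro: less_imp_le)
    moreover have "(\<Sum>i\<in>{..<K}-{j}. q i) \<le> (\<Sum>i<K. q i)"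
      using assms by (intro sum_mono2) (auto intro: less_imp_le)
    ultimately show ?thesis using assms(3) by (simp add: sum_subtractf)
  qed
  have "p j * ln (p j / q j) = p j * ln (p j) - p j * ln (q j)"
    using assms(1,2)[OF assms(4)] by (simp add: ln_div algebra_simps)
  then show ?thesis using e1 e2 e3 e4 by linarith
qed

lemma sum_div_group:
  fixes f :: "nat \<Rightarrow> real"
  assumes "C > 0"
  shows "(\<Sum>j<M*C. f (j div C)) = real C * (\<Sum>g<M. f g)"
proof -
  have "(\<Sum>j<M*C. f (j div C)) = (\<Sum>g<M. \<Sum>j\<in>{g*C..<g*C+C}. f (j div C))"
    by (rule sum.nat_group[symmetric])
  also have "\<dots> = (\<Sum>g<M. \<Sum>j\<in>{g*C..<g*C+C}. f g)"
  proof (intro sum.cong refl)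
    fix g j assume "j \<in> {g*C..<g*C+C}"
    then have "j div C = g" using assms
      by (metis atLeastLessThan_iff div_nat_eqI mult.commute add.commute mult_Suc_right)
    then show "f (j div C) = f g" by simp
  qed
  also have "\<dots> = real C * (\<Sum>g<M. f g)" by (simp add: sum_distrib_left)
  finally show ?thesis .
qed

lemma pcond_sum:
  assumes K: "K > 0" and j: "j < K"
  shows "(\<Sum>i<K. pcond \<alpha> K i j) = 1"
proof -
  have "(\<Sum>i<K. pcond \<alpha> K i j) = pcond \<alpha> K j j + (\<Sum>i\<in>{..<K}-{j}. pcond \<alpha> K i j)"
    using j by (subst sum.remove[of _ j]) auto
  also have "(\<Sum>i\<in>{..<K}-{j}. pcond \<alpha> K i j) = (\<Sum>i\<in>{..<K}-{j}. \<alpha> / real K)"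
    by (intro sum.cong) (auto simp: pcond_def)
  also have "\<dots> = (real K - 1) * (\<alpha> / real K)"
    using j K by (simp add: card_Diff_singleton of_nat_diff)
  finally show ?thesis using K by (simp add: pcond_def field_simps)
qed

lemma pcond_pos: "0 < \<alpha> \<Longrightarrow> \<alpha> < 1 \<Longrightarrow> K > 0 \<Longrightarrow> pcond \<alpha> K i j > 0"
  unfolding pcond_def by (auto intro!: add_pos_pos)

lemma pcond_le1: "0 < \<alpha> \<Longrightarrow> \<alpha> < 1 \<Longrightarrow> K > 0 \<Longrightarrow> pcond \<alpha> K i j \<le> 1"
proof -
  assume a: "0 < \<alpha>" "\<alpha> < 1" "K > 0"
  then have "\<alpha> / real K \<le> \<alpha>" by (simp add: divide_le_eq mult_le_cancel_left1)
  then show ?thesis using a unfolding pcond_def by auto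
qed

lemma pcond_entropy:
  assumes K: "K > 0" and j: "j < K"
  shows "(\<Sum>i<K. pcond \<alpha> K i j * ln (pcond \<alpha> K i j)) = - Lstar \<alpha> K"
proof -
  have "(\<Sum>i<K. pcond \<alpha> K i j * ln (pcond \<alpha> K i j)) = pcond \<alpha> K j j * ln (pcond \<alpha> K j j) + (\<Sum>i\<in>{..<K}-{j}. pcond \<alpha> K i j * ln (pcond \<alpha> K i j))"
    using j by (subst sum.remove[of _ j]) auto
  also have "(\<Sum>i\<in>{..<K}-{j}. pcond \<alpha> K i j * ln (pcond \<alpha> K i j)) = (\<Sum>i\<in>{..<K}-{j}. \<alpha> / real K * ln (\<alpha> / real K))"
    by (intro sum.cong) (auto simp: pcond_def)
  also have "\<dots> = (real K - 1) * (\<alpha> / real K * ln (\<alpha> / real K))"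
    using j K by (simp add: card_Diff_singleton of_nat_diff)
  finally show ?thesis using K by (simp add: pcond_def Lstar_def field_simps)
qed



lemma gap_identity:
  assumes K: "K > 0" and psum: "(\<Sum>j<K. pj j) = 1"
  shows "CE K pj (pcond \<alpha> K) E Et W - Lstar \<alpha> K
      = (\<Sum>j<K. pj j * ((\<Sum>i<K. pcond \<alpha> K i j * ln (pcond \<alpha> K i j))
                     - (\<Sum>i<K. pcond \<alpha> K i j * ln (phat K E Et W i j))))"
proof -
  have "Lstar \<alpha> K = (\<Sum>j<K. pj j * Lstar \<alpha> K)" using psum by (simp add: sum_distrib_right[symmetric])
  also have "\<dots> = (\<Sum>j<K. pj j * (- (\<Sum>i<K. pcond \<alpha> K i j * ln (pcond \<alpha> K i j))))"
    using K by (intro sum.cong refl) (simp add: pcond_entropy)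
  finally show ?thesis unfolding CE_def
    by (simp add: right_diff_distrib sum_subtractf sum_negf)
qed

theorem theorem5p7:
  fixes \<beta> \<alpha> c\<^sub>\<eta> a b :: real
  assumes "\<beta> > 1" and "0 < \<alpha>" and "\<alpha> < 1" and "c\<^sub>\<eta> > 0" and "0 < a" and "a \<le> b"
  shows "\<exists>c>0. \<exists>N::nat. \<exists>\<delta>>0. \<forall>M C E Et \<eta> (T::nat).
           N \<le> M \<and> real M \<le> \<delta> * real C
         \<and> orthonormal_cols (M*C) E \<and> orthonormal_cols (M*C) Et
         \<and> \<eta> > 0 \<and> \<eta> * pitem \<beta> M C 0 \<le> c\<^sub>\<eta>
         \<and> a * real M powr \<beta> \<le> real T \<and> real T \<le> b * real M powr \<beta>
         \<longrightarrow> loss \<beta> M C \<alpha> E Et (gd (loss \<beta> M C \<alpha> E Et) \<eta> (\<lambda>_ _. 0) T) - Lstar \<alpha> (M*C)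
             \<ge> c * ln (real (M*C)) / real T powr (1 - 1/\<beta>)"
proof -
  note beta = assms(1) and al = assms(2,3) and ce = assms(4) and ab = assms(5,6)
  define f where "f k = real (k+1) powr (-\<beta>)" for k
  have fpos: "f k > 0" for k unfolding f_def by simp
  have sumf: "summable f"
  proof -
    have "summable (\<lambda>n. real n powr (-\<beta>))" using beta by (simp add: summable_real_powr_iff)
    then have "summable (\<lambda>n. real (Suc n) powr (-\<beta>))" by (subst summable_Suc_iff)
    then show ?thesis unfolding f_def by simp
  qed
  define Sinf where "Sinf = suminf f"
  have SM_le: "(\<Sum>k<M. f k) \<le> Sinf" for M
    unfolding Sinf_def using sumf fpos by (intro sum_le_suminf) (auto intro: less_imp_le)
  have Sinf1: "Sinf \<ge> 1" using SM_le[of 1] by (simp add: f_def)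
  define D0 where "D0 = 2 * c\<^sub>\<eta> * b * 2 powr \<beta>"
  define L0 where "L0 = 2 * (1 / (1 - \<alpha>) + ln 2 - ln (1 - \<alpha>) + D0)"
  define N where "N = max 2 (nat \<lceil>exp L0\<rceil>)"
  define c where "c = (1 - \<alpha>) * a powr (1 - 1/\<beta>) / (4 * Sinf)"
  have cpos: "c > 0" unfolding c_def using al ab Sinf1 by auto
  have main: "loss \<beta> M C \<alpha> E Et (gd (loss \<beta> M C \<alpha> E Et) \<eta> (\<lambda>_ _. 0) T) - Lstar \<alpha> (M*C)
             \<ge> c * ln (real (M*C)) / real T powr (1 - 1/\<beta>)"
    if hN: "N \<le> M" and hC: "real M \<le> 1 * real C"
      and oE: "orthonormal_cols (M*C) E" and oEt: "orthonormal_cols (M*C) Et"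
      and heta: "\<eta> > 0" "\<eta> * pitem \<beta> M C 0 \<le> c\<^sub>\<eta>"
      and hT: "a * real M powr \<beta> \<le> real T" "real T \<le> b * real M powr \<beta>"
    for M C E Et \<eta> T
  proof -
    define K where "K = M*C"
    have M2: "M \<ge> 2" using hN unfolding N_def by simp
    have CM: "C \<ge> M" using hC by simp
    have C0: "C > 0" using CM M2 by simp
    have KM: "K \<ge> M" unfolding K_def using C0 by simp
    have K2: "K \<ge> 2" using KM M2 by simp
    have K0: "K > 0" using K2 by simp
    have lnK: "ln (real K) \<ge> L0"
    proof -
      have "exp L0 \<le> real (nat \<lceil>exp L0\<rceil>)" by (rule real_nat_ceiling_ge)
      also have "\<dots> \<le> real N" unfolding N_def by simp
      also have "\<dots> \<le> real K" using hN KM by simp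
      finally have "exp L0 \<le> real K" .
      then have "ln (exp L0) \<le> ln (real K)" by (intro ln_mono) auto
      then show ?thesis by simp
    qed
    define SM where "SM = (\<Sum>k<M. f k)"
    have SM1: "SM \<ge> 1"
    proof -
      have "f 0 \<le> SM" unfolding SM_def using M2 fpos by (intro member_le_sum) (auto intro: less_imp_le)
      then show ?thesis by (simp add: f_def)
    qed
    have SMle: "SM \<le> Sinf" unfolding SM_def by (rule SM_le)
    have pit: "pitem \<beta> M C j = f (j div C) / (SM * real C)" for j
      unfolding pitem_def ptil_def SM_def f_def by simp
    have pit0: "pitem \<beta> M C 0 = 1 / (SM * real C)" by (simp add: pit f_def)
    have pnn: "pitem \<beta> M C j \<ge> 0" for j using fpos SM1 C0 by (simp add: pit less_imp_le)
    have psum: "(\<Sum>j<K. pitem \<beta> M C j) = 1"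
    proof -
      have "(\<Sum>j<K. pitem \<beta> M C j) = (\<Sum>j<M*C. (\<lambda>g. f g / (SM * real C)) (j div C))"
        unfolding K_def pit ..
      also have "\<dots> = real C * (\<Sum>g<M. f g / (SM * real C))" by (rule sum_div_group[OF C0])
      also have "\<dots> = 1" using C0 SM1 by (simp add: sum_divide_distrib[symmetric] SM_def[symmetric])
      finally show ?thesis .
    qed
    define L where "L = CE K (pitem \<beta> M C) (pcond \<alpha> K) E Et"
    have lossL: "loss \<beta> M C \<alpha> E Et = L" unfolding L_def K_def loss_CE ..
    define Wt where "Wt = gd L \<eta> (\<lambda>_ _. 0) T"
    define KL where "KL j = (\<Sum>i<K. pcond \<alpha> K i j * ln (pcond \<alpha> K i j))
                     - (\<Sum>i<K. pcond \<alpha> K i j * ln (phat K E Et Wt i j))" for j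
    have gap: "loss \<beta> M C \<alpha> E Et (gd (loss \<beta> M C \<alpha> E Et) \<eta> (\<lambda>_ _. 0) T) - Lstar \<alpha> (M*C)
       = (\<Sum>j<K. pitem \<beta> M C j * KL j)"
      unfolding lossL Wt_def[symmetric] K_def[symmetric] KL_def unfolding L_def by (rule gap_identity[OF K0 psum])
    have KLnn: "KL j \<ge> 0" if "j < K" for j
      unfolding KL_def using al K0 that
      by (intro KL_nonneg) (auto simp: pcond_pos phat_pos pcond_sum phat_sum)
    have KLbad: "KL j \<ge> (1 - \<alpha>) / 2 * ln (real K)" if j: "j < K" and g: "M div 2 \<le> j div C" for j
    proof -
      have Mpos: "real M > 0" using M2 by simp
      have pcb: "0 \<le> pcond \<alpha> K i j' \<and> pcond \<alpha> K i j' \<le> 1" for i j'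
        using al K0 pcond_pos[of \<alpha> K i j'] pcond_le1[of \<alpha> K i j'] by auto
      have logit0: "logit K E Et (\<lambda>_ _. 0) i j' = 0" for i j' unfolding logit_def by simp
      have diff: "logit K E Et Wt j j - logit K E Et Wt i j \<le> 2 * \<eta> * pitem \<beta> M C j * real T"
        if "i < K" for i
        using gd_gap[OF K0 oE[folded K_def] oEt[folded K_def] pcond_sum[OF K0] pcb that j, where \<eta>=\<eta> and pj="pitem \<beta> M C" and Winit="\<lambda>_ _. 0" and t=T]
          heta pnn unfolding Wt_def L_def logit0 by simp
      have etaT: "\<eta> * pitem \<beta> M C j * real T \<le> c\<^sub>\<eta> * b * 2 powr \<beta>"
      proof -
        have fj: "f (j div C) \<le> (real M / 2) powr (-\<beta>)" unfolding f_def
          using g Mpos beta by (intro powr_mono2') auto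
        have "\<eta> * pitem \<beta> M C j * real T = (\<eta> * pitem \<beta> M C 0) * f (j div C) * real T"
          by (simp add: pit f_def)
        also have "\<dots> \<le> c\<^sub>\<eta> * (real M / 2) powr (-\<beta>) * (b * real M powr \<beta>)"
          using heta hT fj fpos[of "j div C"] ce
          by (intro mult_mono) (auto intro: less_imp_le)
        also have "\<dots> = c\<^sub>\<eta> * b * 2 powr \<beta>"
          using Mpos by (simp add: powr_divide powr_minus field_simps)
        finally show ?thesis .
      qed
      have phb: "phat K E Et Wt j j \<le> exp D0 / (real K - 1)"
      proof (rule phat_diag_bound[OF K2 j])
        fix i assume "i < K" "i \<noteq> j"
        then show "logit K E Et Wt j j - logit K E Et Wt i j \<le> D0"
          using diff[of i] etaT unfolding D0_def by linarith
      qed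
      define pd where "pd = pcond \<alpha> K j j"
      define q where "q = phat K E Et Wt j j"
      have pd1: "pd \<ge> 1 - \<alpha>" unfolding pd_def pcond_def using al by simp
      have qpos: "q > 0" unfolding q_def using K0 by (rule phat_pos)
      have KLd: "KL j \<ge> pd * ln (pd / q) - 1"
        unfolding KL_def pd_def q_def
        by (rule KL_diag[where p="\<lambda>i. pcond \<alpha> K i j" and q="\<lambda>i. phat K E Et Wt i j", OF _ _ _ j])
           (use al K0 in \<open>auto simp: pcond_pos phat_pos phat_sum\<close>)
      define X where "X = (1 - \<alpha>) * (real K - 1) / exp D0"
      have K1: "real K - 1 > 0" using K2 by simp
      have Xpos: "X > 0" unfolding X_def using al K1 by simp
      have "(1 - \<alpha>) / (exp D0 / (real K - 1)) \<le> pd / q"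
        using pd1 al qpos phb[folded q_def] K1 by (intro frac_le) auto
      then have Xle: "X \<le> pd / q" unfolding X_def using K1 by (simp add: field_simps)
      have lnX: "ln X = ln (1 - \<alpha>) + ln (real K - 1) - D0"
        unfolding X_def using al K1 by (simp add: ln_mult ln_div)
      have "ln (real K / 2) \<le> ln (real K - 1)" using K2 by (intro ln_mono) auto
      then have lnK1: "ln (real K - 1) \<ge> ln (real K) - ln 2" using K0 by (simp add: ln_div)
      have lnXb: "ln X \<ge> ln (real K) / 2 + 1 / (1 - \<alpha>)"
        using lnX lnK1 lnK unfolding L0_def by (smt (verit) field_sum_of_halves)
      have "0 < 1 / (1 - \<alpha>)" using al by simp
      moreover have "ln (real K) \<ge> 0" using K0 by simp
      ultimately have lnX0: "ln X \<ge> 0" using lnXb by linarith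
      have "ln X \<le> ln (pd / q)" using Xle Xpos by (rule ln_mono)
      then have "(1 - \<alpha>) * ln X \<le> pd * ln (pd / q)"
        using pd1 lnX0 al by (intro mult_mono) auto
      moreover have "(1 - \<alpha>) * ln X \<ge> (1 - \<alpha>) * (ln (real K) / 2 + 1 / (1 - \<alpha>))"
        using lnXb al by (intro mult_left_mono) auto
      moreover have "(1 - \<alpha>) * (ln (real K) / 2 + 1 / (1 - \<alpha>)) = (1 - \<alpha>) / 2 * ln (real K) + 1"
        using al by (simp add: field_simps)
      ultimately show ?thesis using KLd by linarith
    qed
    have mass: "(\<Sum>j<K. if M div 2 \<le> j div C then pitem \<beta> M C j else 0) \<ge> real M powr (1 - \<beta>) / (2 * Sinf)"
    proof -
      have Mpos: "real M > 0" using M2 by simp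
      define h where "h g = (if M div 2 \<le> g then f g / (SM * real C) else 0)" for g
      have "(\<Sum>j<K. if M div 2 \<le> j div C then pitem \<beta> M C j else 0) = (\<Sum>j<M*C. h (j div C))"
        unfolding K_def h_def pit ..
      also have "\<dots> = real C * (\<Sum>g<M. h g)" by (rule sum_div_group[OF C0])
      also have "\<dots> = (\<Sum>g<M. if M div 2 \<le> g then f g / SM else 0)"
        unfolding sum_distrib_left h_def using C0 by (intro sum.cong refl) auto
      also have "\<dots> \<ge> (\<Sum>g<M. if M div 2 \<le> g then real M powr (-\<beta>) / Sinf else 0)"
      proof (intro sum_mono)
        fix g assume g: "g \<in> {..<M}"
        have "real M powr (-\<beta>) \<le> f g" unfolding f_def
          using g beta by (intro powr_mono2') auto
        then have "real M powr (-\<beta>) / Sinf \<le> f g / SM"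
          using SM1 SMle fpos[of g] by (intro frac_le) auto
        then show "(if M div 2 \<le> g then real M powr (-\<beta>) / Sinf else 0) \<le> (if M div 2 \<le> g then f g / SM else 0)"
          by simp
      qed
      also have "(\<Sum>g<M. if M div 2 \<le> g then real M powr (-\<beta>) / Sinf else 0)
          = real (card {M div 2..<M}) * (real M powr (-\<beta>) / Sinf)"
      proof -
        have "{g \<in> {..<M}. M div 2 \<le> g} = {M div 2..<M}" by auto
        then show ?thesis using sum.inter_filter[of "{..<M}" "\<lambda>_. real M powr (-\<beta>) / Sinf" "\<lambda>g. M div 2 \<le> g"]
          by simp
      qed
      also have "\<dots> \<ge> real M / 2 * (real M powr (-\<beta>) / Sinf)"
      proof (rule mult_right_mono)
        show "real M / 2 \<le> real (card {M div 2..<M})" by simp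
        show "0 \<le> real M powr (-\<beta>) / Sinf" using Sinf1 by simp
      qed
      also have "real M / 2 * (real M powr (-\<beta>) / Sinf) = real M powr (1 - \<beta>) / (2 * Sinf)"
        using Mpos by (simp add: powr_diff powr_minus_divide)
      finally show ?thesis .
    qed
    have fin: "(1 - \<alpha>) * ln (real K) * real M powr (1 - \<beta>) / (4 * Sinf) \<ge> c * ln (real K) / real T powr (1 - 1/\<beta>)"
    proof -
      define e where "e = 1 - 1/\<beta>"
      have e0: "e \<ge> 0" unfolding e_def using beta by simp
      have Mpos: "real M > 0" using M2 by simp
      have "(a * real M powr \<beta>) powr e \<le> real T powr e"
        using hT(1) ab Mpos e0 by (intro powr_mono2) auto
      moreover have "(a * real M powr \<beta>) powr e = a powr e * real M powr (\<beta> - 1)"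
        using ab Mpos beta by (simp add: powr_mult powr_powr e_def algebra_simps)
      ultimately have Tp: "a powr e * real M powr (\<beta> - 1) \<le> real T powr e" by simp
      have pos: "a powr e * real M powr (\<beta> - 1) > 0" using ab Mpos by simp
      have lnK0: "ln (real K) \<ge> 0" using K0 by simp
      have cl: "c * ln (real K) \<ge> 0" using cpos lnK0 by simp
      have "c * ln (real K) / real T powr e \<le> c * ln (real K) / (a powr e * real M powr (\<beta> - 1))"
        using pos Tp by (intro divide_left_mono[OF Tp cl] mult_pos_pos[OF _ pos]) linarith+
      also have "\<dots> = (1 - \<alpha>) * ln (real K) * (1 / real M powr (\<beta> - 1)) / (4 * Sinf)"
      proof -
        have "a powr e > 0" "Sinf > 0" "real M powr (\<beta> - 1) > 0" using ab Sinf1 Mpos by auto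
        then show ?thesis unfolding c_def e_def[symmetric] by (simp add: field_simps)
      qed
      also have "1 / real M powr (\<beta> - 1) = real M powr (1 - \<beta>)"
        using powr_minus_divide[of "real M" "\<beta> - 1"] by simp
      finally show ?thesis unfolding e_def .
    qed
    have "(\<Sum>j<K. pitem \<beta> M C j * KL j) \<ge> (\<Sum>j<K. if M div 2 \<le> j div C then pitem \<beta> M C j * ((1 - \<alpha>) / 2 * ln (real K)) else 0)"
    proof (intro sum_mono)
      fix j assume j: "j \<in> {..<K}"
      show "(if M div 2 \<le> j div C then pitem \<beta> M C j * ((1 - \<alpha>) / 2 * ln (real K)) else 0) \<le> pitem \<beta> M C j * KL j"
      proof (cases "M div 2 \<le> j div C")
        case True
        then show ?thesis using mult_left_mono[OF KLbad[of j] pnn[of j]] j by simp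
      next
        case False
        then show ?thesis using KLnn[of j] pnn[of j] j by simp
      qed
    qed
    also have "(\<Sum>j<K. if M div 2 \<le> j div C then pitem \<beta> M C j * ((1 - \<alpha>) / 2 * ln (real K)) else 0)
       = (\<Sum>j<K. if M div 2 \<le> j div C then pitem \<beta> M C j else 0) * ((1 - \<alpha>) / 2 * ln (real K))"
      unfolding sum_distrib_right by (intro sum.cong refl) simp
    also have "\<dots> \<ge> real M powr (1 - \<beta>) / (2 * Sinf) * ((1 - \<alpha>) / 2 * ln (real K))"
    proof (rule mult_right_mono[OF mass])
      have "ln (real K) \<ge> 0" using K0 by simp
      then show "0 \<le> (1 - \<alpha>) / 2 * ln (real K)" using al by simp
    qed
    finally have "(\<Sum>j<K. pitem \<beta> M C j * KL j) \<ge> (1 - \<alpha>) * ln (real K) * real M powr (1 - \<beta>) / (4 * Sinf)"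
      by (simp add: field_simps)
    then show ?thesis using fin gap unfolding K_def by simp
  qed
  show ?thesis
    apply (rule exI[of _ c], intro conjI cpos)
    apply (rule exI[of _ N], rule exI[of _ 1], intro conjI, simp)
    using main by blast
qed

end
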